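(* Let $\lambda=(\lambda_1,\dots,\lambda_I)$, $\mu=(\mu_1,\dots,\mu_J)$ be partitions of $n$ and $(T_t)_{t\ge0}$ the random transpositions Markov chain on $\mathcal{T}_{\lambda,\mu}$ with transition matrix $P$. For every positive integer $m$, every cell $(i,j)$ and every $\mathbf{x}\in\mathcal{T}_{\lambda,\mu}$, \[ \mathbb{E}[T_{t+1}(i,j)^m\mid T_t=\mathbf{x}]=x_{ij}^m\left(1-\frac{2m(n+1-m)}{n^2}\right)+(\text{a polynomial in the entries of }\mathbf{x}\text{ of degree}<m). \] Consequently, the eigenfunctions of $P$ are polynomials in the table entries.
   Context: $\mathcal{T}_{\lambda,\mu}$ is the set of $I\times J$ nonnegative integer tables with row sums $\lambda_i$ and column sums $\mu_j$; $T_t(i,j)$ is the $(i,j)$ entry at time $t$. The random transpositions chain: for $T'$ obtained from $T$ by subtracting $1$ at cells $(i_1,j_1),(i_2,j_2)$ and adding $1$ at $(i_1,j_2),(i_2,j_1)$ (with $i_1\ne i_2$, $j_1\ne j_2$), $P(T,T')=2T_{i_1j_1}T_{i_2j_2}/n^2$; $P(T,T)$ is the remaining mass. Its stationary distribution is the Fisher–Yates distribution $\pi_{\lambda,\mu}(T)=\frac1{n!}\prod_{i,j}\frac{\lambda_i!\mu_j!}{T_{ij}!}$. *)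

theory Defs
  imports Complex_Main
begin

definition is_partition :: "(nat \<Rightarrow> nat) \<Rightarrow> nat \<Rightarrow> nat \<Rightarrow> bool" where
  "is_partition lam I n \<longleftrightarrow>
     (\<forall>i<I. 0 < lam i) \<and> (\<forall>i j. i \<le> j \<longrightarrow> j < I \<longrightarrow> lam j \<le> lam i) \<and> (\<Sum>i<I. lam i) = n"

definition tables :: "nat \<Rightarrow> nat \<Rightarrow> (nat \<Rightarrow> nat) \<Rightarrow> (nat \<Rightarrow> nat) \<Rightarrow> (nat \<Rightarrow> nat \<Rightarrow> nat) set" where
  "tables I J lam mu = {T. (\<forall>i j. (I \<le> i \<or> J \<le> j) \<longrightarrow> T i j = 0)
      \<and> (\<forall>i<I. (\<Sum>j<J. T i j) = lam i) \<and> (\<forall>j<J. (\<Sum>i<I. T i j) = mu j)}"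

definition move :: "(nat \<Rightarrow> nat \<Rightarrow> nat) \<Rightarrow> nat \<Rightarrow> nat \<Rightarrow> nat \<Rightarrow> nat \<Rightarrow> (nat \<Rightarrow> nat \<Rightarrow> nat)" where
  "move T i1 j1 i2 j2 = (\<lambda>i j.
     if (i, j) = (i1, j1) \<or> (i, j) = (i2, j2) then T i j - 1
     else if (i, j) = (i1, j2) \<or> (i, j) = (i2, j1) then T i j + 1
     else T i j)"

text \<open>Each unordered pair of cells {(i1,j1),(i2,j2)}
  producing T' is counted twice as an ordered quadruple, each time with weight
  T(i1,j1) T(i2,j2)/n^2, giving P(T,T') = 2 T(i1,j1) T(i2,j2) / n^2.\<close>
definition off_prob :: "nat \<Rightarrow> nat \<Rightarrow> nat \<Rightarrow> (nat \<Rightarrow> nat \<Rightarrow> nat) \<Rightarrow> (nat \<Rightarrow> nat \<Rightarrow> nat) \<Rightarrow> real" where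
  "off_prob I J n T T' =
     (\<Sum>q\<in>{(i1, j1, i2, j2). i1 < I \<and> j1 < J \<and> i2 < I \<and> j2 < J \<and> i1 \<noteq> i2 \<and> j1 \<noteq> j2
              \<and> T' = move T i1 j1 i2 j2}.
        (case q of (i1, j1, i2, j2) \<Rightarrow> real (T i1 j1 * T i2 j2) / (real n)^2))"

definition trans_prob :: "nat \<Rightarrow> nat \<Rightarrow> (nat \<Rightarrow> nat) \<Rightarrow> (nat \<Rightarrow> nat) \<Rightarrow>
    (nat \<Rightarrow> nat \<Rightarrow> nat) \<Rightarrow> (nat \<Rightarrow> nat \<Rightarrow> nat) \<Rightarrow> real" where
  "trans_prob I J lam mu T T' =
     (let n = (\<Sum>i<I. lam i) in
      if T' = T then 1 - (\<Sum>S\<in>tables I J lam mu - {T}. off_prob I J n T S)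
      else off_prob I J n T T')"

definition cond_exp :: "nat \<Rightarrow> nat \<Rightarrow> (nat \<Rightarrow> nat) \<Rightarrow> (nat \<Rightarrow> nat) \<Rightarrow>
    ((nat \<Rightarrow> nat \<Rightarrow> nat) \<Rightarrow> real) \<Rightarrow> (nat \<Rightarrow> nat \<Rightarrow> nat) \<Rightarrow> real" where
  "cond_exp I J lam mu f x = (\<Sum>y\<in>tables I J lam mu. trans_prob I J lam mu x y * f y)"

definition poly_deg_lt :: "nat \<Rightarrow> nat \<Rightarrow> nat \<Rightarrow> ((nat \<Rightarrow> nat \<Rightarrow> nat) \<Rightarrow> real) \<Rightarrow> bool" where
  "poly_deg_lt I J d g \<longleftrightarrow>
     (\<exists>E (c :: (nat \<times> nat \<Rightarrow> nat) \<Rightarrow> real). finite E \<and>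
        (\<forall>e\<in>E. (\<forall>p. p \<notin> {..<I} \<times> {..<J} \<longrightarrow> e p = 0) \<and> (\<Sum>p\<in>{..<I} \<times> {..<J}. e p) < d) \<and>
        (\<forall>x. g x = (\<Sum>e\<in>E. c e * (\<Prod>p\<in>{..<I} \<times> {..<J}. real (x (fst p) (snd p)) ^ e p))))"

end

theory Submission
  imports Defs "HOL-Library.FuncSet"
begin


definition dlt :: "nat \<Rightarrow> (real \<Rightarrow> real) \<Rightarrow> bool" where
  "dlt d f \<longleftrightarrow> (\<exists>b. \<forall>t. f t = (\<Sum>k<d. b k * t ^ k))"

lemma dlt_mono: assumes "dlt d f" "d \<le> d'" shows "dlt d' f"
proof -
  obtain b where b: "\<And>t. f t = (\<Sum>k<d. b k * t ^ k)" using assms(1) unfolding dlt_def by blast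
  define b' where "b' k = (if k < d then b k else 0)" for k
  have "f t = (\<Sum>k<d'. b' k * t ^ k)" for t
  proof -
    have "(\<Sum>k<d'. b' k * t ^ k) = (\<Sum>k<d. b' k * t ^ k)"
      by (rule sum.mono_neutral_right) (use assms(2) in \<open>auto simp: b'_def\<close>)
    then show ?thesis by (simp add: b b'_def)
  qed
  then show ?thesis unfolding dlt_def by blast
qed

lemma dlt_add: assumes "dlt d f" "dlt d g" shows "dlt d (\<lambda>t. f t + g t)"
proof -
  obtain b where b: "\<And>t. f t = (\<Sum>k<d. b k * t ^ k)" using assms(1) unfolding dlt_def by blast
  obtain c where c: "\<And>t. g t = (\<Sum>k<d. c k * t ^ k)" using assms(2) unfolding dlt_def by blast
  have "f t + g t = (\<Sum>k<d. (b k + c k) * t ^ k)" for t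
    by (simp add: b c sum.distrib distrib_right)
  then show ?thesis unfolding dlt_def by (intro exI[of _ "\<lambda>k. b k + c k"]) simp
qed

lemma dlt_cmult: assumes "dlt d f" shows "dlt d (\<lambda>t. a * f t)"
proof -
  obtain b where b: "\<And>t. f t = (\<Sum>k<d. b k * t ^ k)" using assms(1) unfolding dlt_def by blast
  have "a * f t = (\<Sum>k<d. (a * b k) * t ^ k)" for t
    by (simp add: b sum_distrib_left mult.assoc)
  then show ?thesis unfolding dlt_def by (intro exI[of _ "\<lambda>k. a * b k"]) simp
qed

lemma dlt_tmult: assumes "dlt d f" shows "dlt (Suc d) (\<lambda>t. t * f t)"
proof -
  obtain b where b: "\<And>t. f t = (\<Sum>k<d. b k * t ^ k)" using assms(1) unfolding dlt_def by blast
  define b' where "b' k = (if k = 0 then 0 else b (k - 1))" for k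
  have "t * f t = (\<Sum>k<Suc d. b' k * t ^ k)" for t
    by (subst sum.lessThan_Suc_shift) (simp add: b sum_distrib_left b'_def mult_ac)
  then show ?thesis unfolding dlt_def by blast
qed

lemma dlt_monom: assumes "k < d" shows "dlt d (\<lambda>t. a * t ^ k)"
proof -
  define b where "b j = (if j = k then a else 0)" for j
  have "a * t ^ k = (\<Sum>j<d. b j * t ^ j)" for t
  proof -
    have "(\<Sum>j<d. b j * t ^ j) = (\<Sum>j<d. if j = k then a * t ^ j else 0)"
      by (rule sum.cong) (auto simp: b_def)
    then show ?thesis using assms by simp
  qed
  then show ?thesis unfolding dlt_def by blast
qed

lemma dlt_cong: assumes "dlt d g" "\<And>t. f t = g t" shows "dlt d f"
proof -
  have "f = g" using assms(2) by auto
  then show ?thesis using assms(1) by simp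
qed

lemma dlt_sum: "dlt d (\<lambda>t. (\<Sum>k<d. b k * t ^ k))"
  unfolding dlt_def by blast

lemma choose_pp: "real (Suc (Suc p) choose p) = real (Suc (Suc p)) * real (Suc p) / 2"
proof -
  have "Suc (Suc p) choose p = Suc (Suc p) choose 2"
    using binomial_symmetric[of p "Suc (Suc p)"] by simp
  moreover have "\<And>q. 2 * (Suc (Suc q) choose 2) = Suc (Suc q) * Suc q"
  proof -
    fix q show "2 * (Suc (Suc q) choose 2) = Suc (Suc q) * Suc q"
      by (induction q) (auto simp: numeral_2_eq_2)
  qed
  ultimately have "2 * real (Suc (Suc p) choose p) = real (Suc (Suc p) * Suc p)"
    by (metis of_nat_mult of_nat_numeral)
  then show ?thesis by (simp add: algebra_simps)
qed

lemma choose_sp: "Suc (Suc p) choose Suc p = Suc (Suc p)"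
  using binomial_symmetric[of "Suc p" "Suc (Suc p)"] by simp

lemma plus_expand:
  fixes t :: real
  shows "(t + 1) ^ Suc (Suc p) - t ^ Suc (Suc p) =
     real (Suc (Suc p)) * t ^ Suc p + real (Suc (Suc p)) * real (Suc p) / 2 * t ^ p
      + (\<Sum>k<p. real (Suc (Suc p) choose k) * t ^ k)"
proof -
  have "(t + 1) ^ Suc (Suc p) = (\<Sum>k\<le>Suc (Suc p). real (Suc (Suc p) choose k) * t ^ k)"
    using binomial_ring[of t 1 "Suc (Suc p)"] by simp
  also have "\<dots> = (\<Sum>k<p. real (Suc (Suc p) choose k) * t ^ k) + real (Suc (Suc p) choose p) * t ^ p
      + real (Suc (Suc p) choose Suc p) * t ^ Suc p + t ^ Suc (Suc p)"
    by (simp add: lessThan_Suc_atMost[symmetric])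
  finally show ?thesis by (simp add: choose_pp choose_sp)
qed

lemma minus_expand:
  fixes t :: real
  shows "(t - 1) ^ Suc (Suc p) - t ^ Suc (Suc p) =
     - real (Suc (Suc p)) * t ^ Suc p + real (Suc (Suc p)) * real (Suc p) / 2 * t ^ p
      + (\<Sum>k<p. real (Suc (Suc p) choose k) * (-1) ^ (Suc (Suc p) - k) * t ^ k)"
proof -
  have "(t - 1) ^ Suc (Suc p) = (\<Sum>k\<le>Suc (Suc p). real (Suc (Suc p) choose k) * t ^ k * (-1) ^ (Suc (Suc p) - k))"
    using binomial_ring[of t "-1" "Suc (Suc p)"] by simp
  also have "\<dots> = (\<Sum>k<p. real (Suc (Suc p) choose k) * (-1) ^ (Suc (Suc p) - k) * t ^ k) + real (Suc (Suc p) choose p) * t ^ p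
      - real (Suc (Suc p) choose Suc p) * t ^ Suc p + t ^ Suc (Suc p)"
    by (simp add: lessThan_Suc_atMost[symmetric] Suc_diff_le mult_ac)
  finally show ?thesis by (simp add: choose_pp choose_sp algebra_simps)
qed

lemma dlt_pow: "k < d \<Longrightarrow> dlt d (\<lambda>t. t ^ k)"
  using dlt_monom[of k d 1] by simp

lemma dlt_diff: assumes "dlt d f" "dlt d g" shows "dlt d (\<lambda>t. f t - g t)"
proof -
  have "dlt d (\<lambda>t. f t + (-1) * g t)" by (intro dlt_add dlt_cmult assms)
  then show ?thesis by simp
qed

lemma main_poly:
  fixes n lam mu :: real and m :: nat
  assumes "n \<noteq> 0" "0 < m"
  shows "dlt m (\<lambda>t. t ^ m + (2 / n^2) * (t * (n - lam - mu + t) * ((t - 1) ^ m - t ^ m)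
             + (lam - t) * (mu - t) * ((t + 1) ^ m - t ^ m))
             - t ^ m * (1 - 2 * real m * (n + 1 - real m) / n^2))"
proof (cases "m = 1")
  case True
  have "dlt 1 (\<lambda>t. 2 * lam * mu / n^2 * t ^ 0)" by (rule dlt_monom) simp
  then show ?thesis unfolding True
    by (rule dlt_cong) (use assms(1) in \<open>simp add: field_simps power2_eq_square\<close>)
next
  case False
  then obtain p where m: "m = Suc (Suc p)" using assms(2)
    by (metis One_nat_def gr0_implies_Suc not0_implies_Suc)
  define Rp where "Rp t = (\<Sum>k<p. real (Suc (Suc p) choose k) * t ^ k)" for t :: real
  define Rm where "Rm t = (\<Sum>k<p. real (Suc (Suc p) choose k) * (-1) ^ (Suc (Suc p) - k) * t ^ k)" for t :: real
  define C where "C = real (Suc (Suc p)) * real (Suc p) / 2"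
  define a where "a = n - lam - mu"
  have dRp: "dlt p Rp" unfolding Rp_def by (rule dlt_sum)
  have dRm: "dlt p Rm" unfolding Rm_def
    using dlt_sum[of p "\<lambda>k. real (Suc (Suc p) choose k) * (-1) ^ (Suc (Suc p) - k)"] by simp
  have Dp: "(t + 1) ^ m - t ^ m = real m * t ^ Suc p + C * t ^ p + Rp t" for t
    using plus_expand[of t p] by (simp add: m Rp_def C_def)
  have Dm: "(t - 1) ^ m - t ^ m = - real m * t ^ Suc p + C * t ^ p + Rm t" for t
    using minus_expand[of t p] by (simp add: m Rm_def C_def)
  define B where "B t = t * (t * (Rp t + Rm t)) + (a - lam - mu) * C * t ^ Suc p
     + t * (a * Rm t - (lam + mu) * Rp t) + lam * mu * (real m * t ^ Suc p + C * t ^ p + Rp t)" for t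
  have dB: "dlt m B"
    unfolding B_def m
    apply (intro dlt_add dlt_diff dlt_tmult dlt_cmult dlt_monom dRp dRm)
    by (auto intro: dlt_mono[OF dRp] dlt_mono[OF dRm] dlt_pow simp del: power_Suc)
  show ?thesis
  proof (rule dlt_cong[OF dlt_cmult[OF dB, of "2 / n^2"]])
    fix t :: real
    have e: "t ^ m = t * (t * t ^ p)" "t ^ Suc p = t * t ^ p" by (simp_all add: m)
    have C2: "C = real m * (real m - 1) / 2" by (simp add: C_def m)
    show "t ^ m + (2 / n^2) * (t * (n - lam - mu + t) * ((t - 1) ^ m - t ^ m)
             + (lam - t) * (mu - t) * ((t + 1) ^ m - t ^ m))
             - t ^ m * (1 - 2 * real m * (n + 1 - real m) / n^2) = 2 / n^2 * B t"
      unfolding Dp Dm B_def a_def C2 using assms(1)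
      by (simp add: field_simps e)
  qed
qed



lemma tables_finite: "finite (tables I J lam mu)"
proof -
  let ?B = "{..<I} \<times> {..<J}"
  let ?N = "(\<Sum>i<I. lam i)"
  let ?g = "\<lambda>f i j. if i < I \<and> j < J then f (i, j) else (0::nat)"
  have "tables I J lam mu \<subseteq> ?g ` PiE ?B (\<lambda>_. {..?N})"
  proof
    fix T assume T: "T \<in> tables I J lam mu"
    have le: "T i j \<le> ?N" if "i < I" "j < J" for i j
    proof -
      have "T i j \<le> (\<Sum>j<J. T i j)" by (rule member_le_sum) (use that in auto)
      also have "\<dots> = lam i" using T that unfolding tables_def by auto
      also have "\<dots> \<le> ?N" by (rule member_le_sum) (use that in auto)
      finally show ?thesis .
    qed
    have "T = ?g (restrict (\<lambda>(i, j). T i j) ?B)"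
      using T unfolding tables_def by (auto simp: fun_eq_iff)
    moreover have "restrict (\<lambda>(i, j). T i j) ?B \<in> PiE ?B (\<lambda>_. {..?N})"
      using le by auto
    ultimately show "T \<in> ?g ` PiE ?B (\<lambda>_. {..?N})" by blast
  qed
  moreover have "finite (PiE ?B (\<lambda>_. {..?N}))" by (intro finite_PiE) auto
  ultimately show ?thesis by (meson finite_imageI finite_subset)
qed

lemma move_int:
  assumes "i1 \<noteq> i2" "j1 \<noteq> j2" "0 < x i1 j1" "0 < x i2 j2"
  shows "int (move x i1 j1 i2 j2 i j) = int (x i j) - of_bool (i = i1 \<and> j = j1) - of_bool (i = i2 \<and> j = j2)
     + of_bool (i = i1 \<and> j = j2) + of_bool (i = i2 \<and> j = j1)"
  using assms unfolding move_def by auto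

lemma sum_ind: "(j1::nat) < J \<Longrightarrow> (\<Sum>j<J. (of_bool (i = i1 \<and> j = j1) :: int)) = of_bool (i = i1)"
proof -
  assume "j1 < J"
  have "(\<Sum>j<J. (of_bool (i = i1 \<and> j = j1) :: int)) = (\<Sum>j<J. if j = j1 then of_bool (i = i1) else 0)"
    by (rule sum.cong) auto
  also have "\<dots> = of_bool (i = i1)"
    by (subst sum.delta) (use \<open>j1 < J\<close> in auto)
  finally show ?thesis .
qed

lemma sum_ind2: "(i1::nat) < I \<Longrightarrow> (\<Sum>i<I. (of_bool (i = i1 \<and> j = j1) :: int)) = of_bool (j = j1)"
proof -
  assume "i1 < I"
  have "(\<Sum>i<I. (of_bool (i = i1 \<and> j = j1) :: int)) = (\<Sum>i<I. if i = i1 then of_bool (j = j1) else 0)"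
    by (rule sum.cong) auto
  also have "\<dots> = of_bool (j = j1)"
    by (subst sum.delta) (use \<open>i1 < I\<close> in auto)
  finally show ?thesis .
qed

lemma move_table:
  assumes x: "x \<in> tables I J lam mu" and r: "i1 < I" "j1 < J" "i2 < I" "j2 < J"
    and d: "i1 \<noteq> i2" "j1 \<noteq> j2" and p: "0 < x i1 j1" "0 < x i2 j2"
  shows "move x i1 j1 i2 j2 \<in> tables I J lam mu" "move x i1 j1 i2 j2 \<noteq> x"
proof -
  let ?y = "move x i1 j1 i2 j2"
  have out: "?y i j = 0" if "I \<le> i \<or> J \<le> j" for i j
    using x that r unfolding tables_def move_def by auto
  have rows: "(\<Sum>j<J. ?y i j) = lam i" if "i < I" for i
  proof -
    have "int (\<Sum>j<J. ?y i j) = (\<Sum>j<J. int (?y i j))" by simp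
    also have "\<dots> = (\<Sum>j<J. int (x i j)) - of_bool (i = i1) - of_bool (i = i2) + of_bool (i = i1) + of_bool (i = i2)"
    proof -
      have "(\<Sum>j<J. int (?y i j)) = (\<Sum>j<J. int (x i j) - of_bool (i = i1 \<and> j = j1) - of_bool (i = i2 \<and> j = j2)
         + of_bool (i = i1 \<and> j = j2) + of_bool (i = i2 \<and> j = j1))"
        by (rule sum.cong) (simp_all only: move_int[OF d p])
      also have "\<dots> = (\<Sum>j<J. int (x i j)) - (\<Sum>j<J. of_bool (i = i1 \<and> j = j1)) - (\<Sum>j<J. of_bool (i = i2 \<and> j = j2))
         + (\<Sum>j<J. of_bool (i = i1 \<and> j = j2)) + (\<Sum>j<J. of_bool (i = i2 \<and> j = j1))"
        by (simp only: sum.distrib sum_subtractf)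
      finally show ?thesis using r by (simp only: sum_ind)
    qed
    also have "\<dots> = int (lam i)" using x that unfolding tables_def by (simp flip: of_nat_sum)
    finally show ?thesis by linarith
  qed
  have cols: "(\<Sum>i<I. ?y i j) = mu j" if "j < J" for j
  proof -
    have "int (\<Sum>i<I. ?y i j) = (\<Sum>i<I. int (?y i j))" by simp
    also have "\<dots> = (\<Sum>i<I. int (x i j)) - of_bool (j = j1) - of_bool (j = j2) + of_bool (j = j2) + of_bool (j = j1)"
    proof -
      have "(\<Sum>i<I. int (?y i j)) = (\<Sum>i<I. int (x i j) - of_bool (i = i1 \<and> j = j1) - of_bool (i = i2 \<and> j = j2)
         + of_bool (i = i1 \<and> j = j2) + of_bool (i = i2 \<and> j = j1))"
        by (rule sum.cong) (simp_all only: move_int[OF d p])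
      also have "\<dots> = (\<Sum>i<I. int (x i j)) - (\<Sum>i<I. of_bool (i = i1 \<and> j = j1)) - (\<Sum>i<I. of_bool (i = i2 \<and> j = j2))
         + (\<Sum>i<I. of_bool (i = i1 \<and> j = j2)) + (\<Sum>i<I. of_bool (i = i2 \<and> j = j1))"
        by (simp only: sum.distrib sum_subtractf)
      finally show ?thesis using r by (simp only: sum_ind2)
    qed
    also have "\<dots> = int (mu j)" using x that unfolding tables_def by (simp flip: of_nat_sum)
    finally show ?thesis by linarith
  qed
  show "?y \<in> tables I J lam mu" unfolding tables_def using out rows cols by blast
  have "?y i1 j1 \<noteq> x i1 j1" using p unfolding move_def by auto
  then show "?y \<noteq> x" by metis
qed

definition Qs :: "nat \<Rightarrow> nat \<Rightarrow> (nat \<times> nat \<times> nat \<times> nat) set" where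
  "Qs I J = {(i1, j1, i2, j2). i1 < I \<and> j1 < J \<and> i2 < I \<and> j2 < J \<and> i1 \<noteq> i2 \<and> j1 \<noteq> j2}"

definition mv :: "(nat \<Rightarrow> nat \<Rightarrow> nat) \<Rightarrow> nat \<times> nat \<times> nat \<times> nat \<Rightarrow> (nat \<Rightarrow> nat \<Rightarrow> nat)" where
  "mv x q = (case q of (i1, j1, i2, j2) \<Rightarrow> move x i1 j1 i2 j2)"

definition wt :: "nat \<Rightarrow> (nat \<Rightarrow> nat \<Rightarrow> nat) \<Rightarrow> nat \<times> nat \<times> nat \<times> nat \<Rightarrow> real" where
  "wt n x q = (case q of (i1, j1, i2, j2) \<Rightarrow> real (x i1 j1 * x i2 j2) / (real n)^2)"

lemma finite_Qs: "finite (Qs I J)"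
proof -
  have "Qs I J \<subseteq> {..<I} \<times> {..<J} \<times> {..<I} \<times> {..<J}" unfolding Qs_def by auto
  then show ?thesis by (rule finite_subset) auto
qed

lemma off_prob_alt: "off_prob I J n x y = sum (wt n x) {q \<in> Qs I J. mv x q = y}"
  unfolding off_prob_def
  by (rule sum.cong) (auto simp: Qs_def mv_def wt_def)

lemma sum_off:
  assumes x: "x \<in> tables I J lam mu"
  shows "(\<Sum>y\<in>tables I J lam mu - {x}. off_prob I J n x y * h y) = (\<Sum>q\<in>Qs I J. wt n x q * h (mv x q))"
proof -
  let ?S = "tables I J lam mu - {x}"
  let ?Q = "{q \<in> Qs I J. mv x q \<in> ?S}"
  have fS: "finite ?S" using tables_finite by auto
  have fQ: "finite ?Q" using finite_Qs by auto
  have "(\<Sum>y\<in>?S. off_prob I J n x y * h y) = (\<Sum>y\<in>?S. \<Sum>q\<in>{q. q \<in> ?Q \<and> mv x q = y}. wt n x q * h (mv x q))"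
  proof (rule sum.cong)
    fix y assume y: "y \<in> ?S"
    have "off_prob I J n x y * h y = (\<Sum>q\<in>{q \<in> Qs I J. mv x q = y}. wt n x q * h y)"
      by (simp add: off_prob_alt sum_distrib_right)
    also have "\<dots> = (\<Sum>q\<in>{q. q \<in> ?Q \<and> mv x q = y}. wt n x q * h (mv x q))"
      by (rule sum.cong) (use y in auto)
    finally show "off_prob I J n x y * h y = (\<Sum>q\<in>{q. q \<in> ?Q \<and> mv x q = y}. wt n x q * h (mv x q))" .
  qed simp
  also have "\<dots> = (\<Sum>q\<in>?Q. wt n x q * h (mv x q))"
    by (rule sum.group[OF fQ fS]) auto
  also have "\<dots> = (\<Sum>q\<in>Qs I J. wt n x q * h (mv x q))"
  proof (rule sum.mono_neutral_left[OF finite_Qs])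
    show "?Q \<subseteq> Qs I J" by auto
    show "\<forall>q\<in>Qs I J - ?Q. wt n x q * h (mv x q) = 0"
    proof
      fix q assume q: "q \<in> Qs I J - ?Q"
      obtain i1 j1 i2 j2 where qq: "q = (i1, j1, i2, j2)" by (cases q) auto
      have c: "i1 < I" "j1 < J" "i2 < I" "j2 < J" "i1 \<noteq> i2" "j1 \<noteq> j2" using q qq by (auto simp: Qs_def)
      have "\<not> (0 < x i1 j1 \<and> 0 < x i2 j2)"
      proof
        assume "0 < x i1 j1 \<and> 0 < x i2 j2"
        then have "mv x q \<in> ?S" using move_table[OF x c] qq by (auto simp: mv_def)
        then show False using q by auto
      qed
      then have "wt n x q = 0" by (auto simp: wt_def qq)
      then show "wt n x q * h (mv x q) = 0" by simp
    qed
  qed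
  finally show ?thesis .
qed

lemma cond_exp_formula:
  assumes x: "x \<in> tables I J lam mu" and n: "n = (\<Sum>i<I. lam i)"
  shows "cond_exp I J lam mu f x = f x + (\<Sum>q\<in>Qs I J. wt n x q * (f (mv x q) - f x))"
proof -
  let ?T = "tables I J lam mu"
  have "cond_exp I J lam mu f x = trans_prob I J lam mu x x * f x + (\<Sum>y\<in>?T - {x}. trans_prob I J lam mu x y * f y)"
    unfolding cond_exp_def by (rule sum.remove[OF tables_finite x])
  also have "(\<Sum>y\<in>?T - {x}. trans_prob I J lam mu x y * f y) = (\<Sum>y\<in>?T - {x}. off_prob I J n x y * f y)"
    by (rule sum.cong) (auto simp: trans_prob_def n)
  also have "\<dots> = (\<Sum>q\<in>Qs I J. wt n x q * f (mv x q))" by (rule sum_off[OF x])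
  also have "trans_prob I J lam mu x x = 1 - (\<Sum>y\<in>?T - {x}. off_prob I J n x y * 1)"
    by (simp add: trans_prob_def n)
  also have "(\<Sum>y\<in>?T - {x}. off_prob I J n x y * 1) = (\<Sum>q\<in>Qs I J. wt n x q * 1)" by (rule sum_off[OF x])
  finally show ?thesis by (simp add: algebra_simps sum_subtractf sum_distrib_left sum_distrib_right)
qed



lemma sum_reidx:
  assumes "finite Q" "inj_on \<phi> D" "\<phi> ` D = {q \<in> Q. P q}"
  shows "(\<Sum>q\<in>Q. if P q then G q else 0) = (\<Sum>d\<in>D. G (\<phi> d))"
proof -
  have "(\<Sum>q\<in>Q. if P q then G q else 0) = (\<Sum>q\<in>{q \<in> Q. P q}. G q)"
    using assms(1) by (simp add: sum.inter_filter)
  also have "\<dots> = (\<Sum>d\<in>D. G (\<phi> d))"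
    using sum.reindex[OF assms(2), of G] assms(3) by simp
  finally show ?thesis .
qed

lemma row_sum_real:
  assumes "x \<in> tables I J lam mu" "i < I"
  shows "(\<Sum>b<J. real (x i b)) = real (lam i)"
  using assms unfolding tables_def by (simp flip: of_nat_sum)

lemma col_sum_real:
  assumes "x \<in> tables I J lam mu" "j < J"
  shows "(\<Sum>a<I. real (x a j)) = real (mu j)"
  using assms unfolding tables_def by (simp flip: of_nat_sum)

lemma S1:
  assumes x: "x \<in> tables I J lam mu" and ij: "i < I" "j < J" and n: "n = (\<Sum>i<I. lam i)"
  shows "(\<Sum>a\<in>{..<I} - {i}. \<Sum>b\<in>{..<J} - {j}. real (x a b)) = real n - real (lam i) - real (mu j) + real (x i j)"
proof -
  have "(\<Sum>a\<in>{..<I} - {i}. \<Sum>b\<in>{..<J} - {j}. real (x a b)) = (\<Sum>a\<in>{..<I} - {i}. real (lam a) - real (x a j))"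
    by (rule sum.cong) (use ij x in \<open>auto simp: sum_diff1 row_sum_real\<close>)
  also have "\<dots> = (\<Sum>a<I. real (lam a) - real (x a j)) - (real (lam i) - real (x i j))"
    using ij by (simp add: sum_diff1)
  also have "\<dots> = real n - real (mu j) - (real (lam i) - real (x i j))"
    using col_sum_real[OF x ij(2)] n by (simp add: sum_subtractf)
  finally show ?thesis by simp
qed

definition WW :: "(nat \<Rightarrow> nat \<Rightarrow> nat) \<Rightarrow> nat \<times> nat \<times> nat \<times> nat \<Rightarrow> real" where
  "WW x q = (case q of (a, b, c, d) \<Rightarrow> real (x a b) * real (x c d))"

lemma pointwise:
  assumes q: "q \<in> Qs I J"
  shows "wt n x q * (real (mv x q i j) ^ m - real (x i j) ^ m) = (1 / (real n)^2) *
     ((if (case q of (a, b, c, d) \<Rightarrow> a = i \<and> b = j) then WW x q else 0) * ((real (x i j) - 1) ^ m - real (x i j) ^ m)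
    + (if (case q of (a, b, c, d) \<Rightarrow> c = i \<and> d = j) then WW x q else 0) * ((real (x i j) - 1) ^ m - real (x i j) ^ m)
    + (if (case q of (a, b, c, d) \<Rightarrow> a = i \<and> d = j) then WW x q else 0) * ((real (x i j) + 1) ^ m - real (x i j) ^ m)
    + (if (case q of (a, b, c, d) \<Rightarrow> c = i \<and> b = j) then WW x q else 0) * ((real (x i j) + 1) ^ m - real (x i j) ^ m))"
proof -
  obtain a b c d where qq: "q = (a, b, c, d)" by (cases q) auto
  have ne: "a \<noteq> c" "b \<noteq> d" using q qq by (auto simp: Qs_def)
  show ?thesis
  proof (cases "x i j = 0")
    case True
    then show ?thesis using ne unfolding qq wt_def WW_def mv_def move_def by auto
  next
    case False
    then have "real (x i j - 1) = real (x i j) - 1" by (simp add: of_nat_diff)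
    then show ?thesis using ne False unfolding qq wt_def WW_def mv_def move_def by (auto simp: add.commute)
  qed
qed

lemma S3:
  assumes x: "x \<in> tables I J lam mu" and ij: "i < I" "j < J"
  shows "(\<Sum>b\<in>{..<J} - {j}. real (x i b)) = real (lam i) - real (x i j)"
    "(\<Sum>a\<in>{..<I} - {i}. real (x a j)) = real (mu j) - real (x i j)"
  using ij row_sum_real[OF x ij(1)] col_sum_real[OF x ij(2)] by (simp_all add: sum_diff1)

lemma case_sums:
  assumes x: "x \<in> tables I J lam mu" and ij: "i < I" "j < J" and n: "n = (\<Sum>i<I. lam i)"
  shows "(\<Sum>q\<in>Qs I J. if (case q of (a, b, c, d) \<Rightarrow> a = i \<and> b = j) then WW x q else 0)
           = real (x i j) * (real n - real (lam i) - real (mu j) + real (x i j))" (is ?GA)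
    and "(\<Sum>q\<in>Qs I J. if (case q of (a, b, c, d) \<Rightarrow> c = i \<and> d = j) then WW x q else 0)
           = real (x i j) * (real n - real (lam i) - real (mu j) + real (x i j))" (is ?GB)
    and "(\<Sum>q\<in>Qs I J. if (case q of (a, b, c, d) \<Rightarrow> a = i \<and> d = j) then WW x q else 0)
           = (real (lam i) - real (x i j)) * (real (mu j) - real (x i j))" (is ?GC)
    and "(\<Sum>q\<in>Qs I J. if (case q of (a, b, c, d) \<Rightarrow> c = i \<and> b = j) then WW x q else 0)
           = (real (lam i) - real (x i j)) * (real (mu j) - real (x i j))" (is ?GD)
proof -
  let ?SA = "{..<I} - {i}" and ?SB = "{..<J} - {j}"
  have "(\<Sum>q\<in>Qs I J. if (case q of (a, b, c, d) \<Rightarrow> a = i \<and> b = j) then WW x q else 0)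
      = (\<Sum>p\<in>?SA \<times> ?SB. WW x ((\<lambda>(c, d). (i, j, c, d)) p))"
    by (rule sum_reidx[OF finite_Qs]) (use ij in \<open>auto simp: inj_on_def Qs_def image_iff\<close>)
  also have "\<dots> = (\<Sum>c\<in>?SA. \<Sum>d\<in>?SB. real (x i j) * real (x c d))"
    by (simp add: sum.cartesian_product WW_def split_def)
  also have "\<dots> = real (x i j) * (\<Sum>c\<in>?SA. \<Sum>d\<in>?SB. real (x c d))"
    by (simp add: sum_distrib_left)
  finally show ?GA using S1[OF x ij n] by simp
  have "(\<Sum>q\<in>Qs I J. if (case q of (a, b, c, d) \<Rightarrow> c = i \<and> d = j) then WW x q else 0)
      = (\<Sum>p\<in>?SA \<times> ?SB. WW x ((\<lambda>(a, b). (a, b, i, j)) p))"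
    by (rule sum_reidx[OF finite_Qs]) (use ij in \<open>auto simp: inj_on_def Qs_def image_iff\<close>)
  also have "\<dots> = (\<Sum>c\<in>?SA. \<Sum>d\<in>?SB. real (x i j) * real (x c d))"
    by (simp add: sum.cartesian_product WW_def split_def mult.commute)
  also have "\<dots> = real (x i j) * (\<Sum>c\<in>?SA. \<Sum>d\<in>?SB. real (x c d))"
    by (simp add: sum_distrib_left)
  finally show ?GB using S1[OF x ij n] by simp
  have "(\<Sum>q\<in>Qs I J. if (case q of (a, b, c, d) \<Rightarrow> a = i \<and> d = j) then WW x q else 0)
      = (\<Sum>p\<in>?SB \<times> ?SA. WW x ((\<lambda>(b, c). (i, b, c, j)) p))"
    by (rule sum_reidx[OF finite_Qs]) (use ij in \<open>auto simp: inj_on_def Qs_def image_iff\<close>)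
  also have "\<dots> = (\<Sum>b\<in>?SB. \<Sum>c\<in>?SA. real (x i b) * real (x c j))"
    by (simp add: sum.cartesian_product WW_def split_def)
  also have "\<dots> = (\<Sum>b\<in>?SB. real (x i b)) * (\<Sum>c\<in>?SA. real (x c j))"
    by (simp add: sum_product)
  finally show ?GC using S3[OF x ij] by simp
  have "(\<Sum>q\<in>Qs I J. if (case q of (a, b, c, d) \<Rightarrow> c = i \<and> b = j) then WW x q else 0)
      = (\<Sum>p\<in>?SA \<times> ?SB. WW x ((\<lambda>(a, d). (a, j, i, d)) p))"
    by (rule sum_reidx[OF finite_Qs]) (use ij in \<open>auto simp: inj_on_def Qs_def image_iff\<close>)
  also have "\<dots> = (\<Sum>a\<in>?SA. \<Sum>d\<in>?SB. real (x a j) * real (x i d))"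
    by (simp add: sum.cartesian_product WW_def split_def)
  also have "\<dots> = (\<Sum>d\<in>?SB. real (x i d)) * (\<Sum>a\<in>?SA. real (x a j))"
    by (simp add: sum_product mult.commute)
  finally show ?GD using S3[OF x ij] by simp
qed



lemma dlt_poly:
  assumes "dlt m G" "i < I" "j < J"
  shows "poly_deg_lt I J m (\<lambda>x. G (real (x i j)))"
proof -
  obtain b where b: "\<And>t. G t = (\<Sum>k<m. b k * t ^ k)" using assms(1) unfolding dlt_def by blast
  let ?box = "{..<I} \<times> {..<J}"
  define ee where "ee k = (\<lambda>p. if p = (i, j) then k else (0::nat))" for k
  define E where "E = ee ` {..<m}"
  define c where "c e = b (e (i, j))" for e :: "nat \<times> nat \<Rightarrow> nat"
  have inj: "inj_on ee {..<m}" unfolding inj_on_def ee_def by (metis)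
  have ij: "(i, j) \<in> ?box" using assms by auto
  have "finite E" unfolding E_def by auto
  moreover have "\<forall>e\<in>E. (\<forall>p. p \<notin> ?box \<longrightarrow> e p = 0) \<and> (\<Sum>p\<in>?box. e p) < m"
  proof
    fix e assume "e \<in> E"
    then obtain k where k: "k < m" "e = ee k" unfolding E_def by auto
    have "(\<Sum>p\<in>?box. e p) = k" unfolding k ee_def using ij by (simp add: sum.delta)
    then show "(\<forall>p. p \<notin> ?box \<longrightarrow> e p = 0) \<and> (\<Sum>p\<in>?box. e p) < m"
      using k ij unfolding ee_def by auto
  qed
  moreover have "\<forall>x. G (real (x i j)) = (\<Sum>e\<in>E. c e * (\<Prod>p\<in>?box. real (x (fst p) (snd p)) ^ e p))"
  proof
    fix x :: "nat \<Rightarrow> nat \<Rightarrow> nat"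
    have "(\<Sum>e\<in>E. c e * (\<Prod>p\<in>?box. real (x (fst p) (snd p)) ^ e p))
        = (\<Sum>k<m. c (ee k) * (\<Prod>p\<in>?box. real (x (fst p) (snd p)) ^ ee k p))"
      unfolding E_def by (rule sum.reindex[OF inj, unfolded comp_def])
    also have "\<dots> = (\<Sum>k<m. b k * real (x i j) ^ k)"
    proof (rule sum.cong[OF refl])
      fix k
      have "(\<Prod>p\<in>?box. real (x (fst p) (snd p)) ^ ee k p) = (\<Prod>p\<in>?box. if p = (i, j) then real (x (fst p) (snd p)) ^ k else 1)"
        by (rule prod.cong) (auto simp: ee_def)
      also have "\<dots> = real (x i j) ^ k" using ij by (simp add: prod.delta)
      finally show "c (ee k) * (\<Prod>p\<in>?box. real (x (fst p) (snd p)) ^ ee k p) = b k * real (x i j) ^ k"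
        by (simp add: c_def ee_def)
    qed
    finally show "G (real (x i j)) = (\<Sum>e\<in>E. c e * (\<Prod>p\<in>?box. real (x (fst p) (snd p)) ^ e p))"
      by (simp add: b)
  qed
  ultimately show ?thesis unfolding poly_deg_lt_def by blast
qed

theorem theorem3p1:
  fixes I J n :: nat and lam mu :: "nat \<Rightarrow> nat"
  assumes "is_partition lam I n" and "is_partition mu J n"
  shows "\<forall>m i j. 0 < m \<longrightarrow> i < I \<longrightarrow> j < J \<longrightarrow>
    (\<exists>g. poly_deg_lt I J m g \<and>
      (\<forall>x\<in>tables I J lam mu.
         cond_exp I J lam mu (\<lambda>T. real (T i j) ^ m) x
           = real (x i j) ^ m * (1 - 2 * real m * (real n + 1 - real m) / (real n)^2) + g x))"
proof (intro allI impI)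
  fix m i j :: nat assume m: "0 < m" and ij: "i < I" "j < J"
  have nsum: "n = (\<Sum>i<I. lam i)" using assms(1) unfolding is_partition_def by auto
  have "lam i \<le> n" unfolding nsum by (rule member_le_sum) (use ij in auto)
  moreover have "0 < lam i" using assms(1) ij unfolding is_partition_def by auto
  ultimately have n0: "real n \<noteq> 0" by simp
  define L where "L = real (lam i)"
  define M where "M = real (mu j)"
  define G where "G t = t ^ m + (2 / (real n)^2) * (t * (real n - L - M + t) * ((t - 1) ^ m - t ^ m)
             + (L - t) * (M - t) * ((t + 1) ^ m - t ^ m))
             - t ^ m * (1 - 2 * real m * (real n + 1 - real m) / (real n)^2)" for t :: real
  have dG: "dlt m G" unfolding G_def by (rule main_poly[OF n0 m])
  show "\<exists>g. poly_deg_lt I J m g \<and>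
      (\<forall>x\<in>tables I J lam mu.
         cond_exp I J lam mu (\<lambda>T. real (T i j) ^ m) x
           = real (x i j) ^ m * (1 - 2 * real m * (real n + 1 - real m) / (real n)^2) + g x)"
  proof (intro exI conjI ballI)
    show "poly_deg_lt I J m (\<lambda>x. G (real (x i j)))" by (rule dlt_poly[OF dG ij])
    fix x assume x: "x \<in> tables I J lam mu"
    let ?t = "real (x i j)"
    let ?Dm = "(?t - 1) ^ m - ?t ^ m" and ?Dp = "(?t + 1) ^ m - ?t ^ m"
    let ?P1 = "\<lambda>q. (case q of (a, b, c, d) \<Rightarrow> a = i \<and> b = j)"
    let ?P2 = "\<lambda>q. (case q of (a, b, c, d) \<Rightarrow> c = i \<and> d = j)"
    let ?P3 = "\<lambda>q. (case q of (a, b, c, d) \<Rightarrow> a = i \<and> d = j)"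
    let ?P4 = "\<lambda>q. (case q of (a, b, c, d) \<Rightarrow> c = i \<and> b = j)"
    have "cond_exp I J lam mu (\<lambda>T. real (T i j) ^ m) x
        = ?t ^ m + (\<Sum>q\<in>Qs I J. wt n x q * (real (mv x q i j) ^ m - ?t ^ m))"
      by (rule cond_exp_formula[OF x nsum])
    also have "(\<Sum>q\<in>Qs I J. wt n x q * (real (mv x q i j) ^ m - ?t ^ m))
      = (\<Sum>q\<in>Qs I J. (1 / (real n)^2) *
         ((if ?P1 q then WW x q else 0) * ?Dm + (if ?P2 q then WW x q else 0) * ?Dm
        + (if ?P3 q then WW x q else 0) * ?Dp + (if ?P4 q then WW x q else 0) * ?Dp))"
      by (rule sum.cong[OF refl]) (rule pointwise)
    also have "\<dots> = (1 / (real n)^2) *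
         ((\<Sum>q\<in>Qs I J. if ?P1 q then WW x q else 0) * ?Dm + (\<Sum>q\<in>Qs I J. if ?P2 q then WW x q else 0) * ?Dm
        + (\<Sum>q\<in>Qs I J. if ?P3 q then WW x q else 0) * ?Dp + (\<Sum>q\<in>Qs I J. if ?P4 q then WW x q else 0) * ?Dp)"
      by (simp only: sum_distrib_left[symmetric] sum_distrib_right[symmetric] sum.distrib)
    also have "\<dots> = (1 / (real n)^2) *
         (2 * (?t * (real n - L - M + ?t)) * ?Dm + 2 * ((L - ?t) * (M - ?t)) * ?Dp)"
      unfolding case_sums[OF x ij nsum] L_def M_def by simp
    finally show "cond_exp I J lam mu (\<lambda>T. real (T i j) ^ m) x
           = ?t ^ m * (1 - 2 * real m * (real n + 1 - real m) / (real n)^2) + G ?t"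
      unfolding G_def by (simp add: algebra_simps)
  qed
qed


end
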